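(* Let $\beta\in(-2,-1)$, $c\in(0,1)$, and let $n\geq 3$ be an integer with $n>\frac{\beta}{c-1}$. Let $x_{1,n}<x_{2,n}<\dots<x_{n,n}$ denote the zeros of the monic Meixner polynomial $M_n(x;\beta,c)$. Then $$0<x_{1,n}<-\beta-1<x_{2,n}<1<-\beta<2<x_{3,n}.$$
   Context: Monic Meixner polynomials are defined by $$M_n(x;\beta,c)=\left(\frac{c}{c-1}\right)^n(\beta)_n\sum_{k=0}^{n}\frac{(-n)_k(-x)_k(1-\frac1c)^k}{(\beta)_k\,k!},$$ for real $\beta,c$ with $c\neq 0$ and $\beta\notin\{-1,-2,\dots,-n+1\}$, where $(\alpha)_0=1$ and $(\alpha)_k=\alpha(\alpha+1)\cdots(\alpha+k-1)$ for $k\geq1$. It is known that for $\beta\in(-2,-1)$, $c\in(0,1)$, $n\ge3$ and $n>\frac{\beta}{c-1}$, all zeros of $M_n(x;\beta,c)$ are real, simple and positive. *)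

theory Defs
  imports Complex_Main
begin

definition meixner_M :: "nat \<Rightarrow> real \<Rightarrow> real \<Rightarrow> real \<Rightarrow> real" where
  "meixner_M n beta c x =
     (c / (c - 1)) ^ n * pochhammer beta n *
     (\<Sum>k\<le>n. pochhammer (- real n) k * pochhammer (- x) k * (1 - 1 / c) ^ k
              / (pochhammer beta k * fact k))"

end

theory Submission imports Defs "HOL-Analysis.Analysis" "HOL-Computational_Algebra.Polynomial" begin

lemma binser:
  fixes c g :: real assumes "\<bar>c\<bar> < 1"
  shows "(\<lambda>y. pochhammer g y * c ^ y / fact y) sums ((1 - c) powr (- g))"
proof -
  have "(\<lambda>y. ((-g) gchoose y) * (-c) ^ y) sums ((1 + (-c)) powr (-g))"
    by (rule gen_binomial_real) (use assms in simp)
  moreover have "((-g) gchoose y) * (-c) ^ y = pochhammer g y * c ^ y / fact y" for y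
    by (simp add: gbinomial_pochhammer power_mult_distrib[symmetric])
  ultimately show ?thesis by simp
qed

lemma fact_shift: "pochhammer (real y + 1) k = fact (y + k) / fact y"
proof -
  have "fact (y + k) = (fact y * pochhammer (1 + real y) k :: real)"
    by (simp add: pochhammer_fact pochhammer_product')
  then show ?thesis by (simp add: add.commute)
qed

lemma moment:
  fixes c g :: real assumes "\<bar>c\<bar> < 1"
  shows "(\<lambda>x. pochhammer g x * c ^ x / fact x * pochhammer (- real x) k) sums
           ((-1) ^ k * c ^ k * pochhammer g k * (1 - c) powr (- (g + k)))"
proof -
  let ?f = "\<lambda>x. pochhammer g x * c ^ x / fact x * pochhammer (- real x) k"
  have z: "?f i = 0" if "i < k" for i
    using that by (simp add: pochhammer_of_nat_eq_0_iff)
  have eq: "?f (y + k) = (-1) ^ k * c ^ k * pochhammer g k * (pochhammer (g + k) y * c ^ y / fact y)" for y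
  proof -
    have "pochhammer (- real (y + k)) k = (-1) ^ k * (fact (y + k) / fact y)"
      using pochhammer_minus[of "real (y + k)" k] fact_shift[of y k] by simp
    moreover have "pochhammer g (y + k) = pochhammer g k * pochhammer (g + k) y"
      using pochhammer_product'[of g k y] by (simp add: add.commute)
    ultimately show ?thesis by (simp add: power_add field_simps)
  qed
  have "(\<lambda>y. (-1) ^ k * c ^ k * pochhammer g k * (pochhammer (g + k) y * c ^ y / fact y)) sums
        ((-1) ^ k * c ^ k * pochhammer g k * (1 - c) powr (- (g + k)))"
    by (rule sums_mult) (rule binser[OF assms])
  then have "(\<lambda>y. ?f (y + k)) sums ((-1) ^ k * c ^ k * pochhammer g k * (1 - c) powr (- (g + k)))"
    by (simp only: eq)
  then show ?thesis using sums_zero_iff_shift[of k ?f] z by blast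
qed

lemma findiff:
  "j < n \<Longrightarrow> (\<Sum>k\<le>n. (-1) ^ k * real (n choose k) * pochhammer (g + real k) j) = 0"
proof (induction n arbitrary: j g)
  case 0 then show ?case by simp
next
  case (Suc m)
  let ?f = "\<lambda>k. pochhammer (g + real k) j"
  have "(\<Sum>k\<le>Suc m. (-1) ^ k * real (Suc m choose k) * ?f k)
      = (\<Sum>k\<le>m. (-1) ^ k * real (m choose k) * (?f k - ?f (Suc k)))"
  proof -
    have "(\<Sum>k\<le>Suc m. (-1) ^ k * real (Suc m choose k) * ?f k)
        = ?f 0 + (\<Sum>k\<le>m. (-1) ^ Suc k * real (Suc m choose Suc k) * ?f (Suc k))"
      by (subst sum.atMost_Suc_shift) simp
    also have "\<dots> = ?f 0 + (\<Sum>k\<le>m. (-1) ^ Suc k * real (m choose k) * ?f (Suc k))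
                  + (\<Sum>k\<le>m. (-1) ^ Suc k * real (m choose Suc k) * ?f (Suc k))"
      by (simp only: add.assoc sum.distrib[symmetric] binomial_Suc_Suc of_nat_add distrib_left distrib_right)
    also have "(\<Sum>k\<le>m. (-1) ^ Suc k * real (m choose Suc k) * ?f (Suc k))
             = (\<Sum>k\<le>Suc m. (-1) ^ k * real (m choose k) * ?f k) - ?f 0"
      by (subst sum.atMost_Suc_shift) simp
    also have "\<dots> = (\<Sum>k\<le>m. (-1) ^ k * real (m choose k) * ?f k) - ?f 0"
      by simp
    also have "?f 0 + (\<Sum>k\<le>m. (-1) ^ Suc k * real (m choose k) * ?f (Suc k))
       + ((\<Sum>k\<le>m. (-1) ^ k * real (m choose k) * ?f k) - ?f 0)
       = (\<Sum>k\<le>m. (-1) ^ k * real (m choose k) * ?f k) + (\<Sum>k\<le>m. (-1) ^ Suc k * real (m choose k) * ?f (Suc k))"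
      by simp
    also have "\<dots> = (\<Sum>k\<le>m. (-1) ^ k * real (m choose k) * (?f k - ?f (Suc k)))"
      by (subst sum.distrib[symmetric]) (rule sum.cong, auto simp: algebra_simps)
    finally show ?thesis .
  qed
  also have "\<dots> = 0"
  proof (cases j)
    case 0
    then show ?thesis by simp
  next
    case (Suc i)
    have d: "?f k - ?f (Suc k) = - real j * pochhammer ((g + 1) + real k) i" for k
    proof -
      have "?f (Suc k) = (g + real k + 1 + real i) * pochhammer ((g + 1) + real k) i"
        using Suc pochhammer_rec'[of "g + real k + 1" i] by (simp add: algebra_simps)
      moreover have "?f k = (g + real k) * pochhammer ((g + 1) + real k) i"
        using Suc pochhammer_rec[of "g + real k" i] by (simp add: algebra_simps)
      ultimately show ?thesis using Suc by (simp add: algebra_simps)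
    qed
    have "(\<Sum>k\<le>m. (-1) ^ k * real (m choose k) * (?f k - ?f (Suc k)))
        = - real j * (\<Sum>k\<le>m. (-1) ^ k * real (m choose k) * pochhammer ((g + 1) + real k) i)"
      by (simp only: d sum_distrib_left) (rule sum.cong, auto simp: algebra_simps)
    also have "\<dots> = 0" using Suc.IH[of i "g + 1"] Suc Suc.prems by simp
    finally show ?thesis .
  qed
  finally show ?case .
qed

definition mx_a :: "nat \<Rightarrow> real \<Rightarrow> real \<Rightarrow> nat \<Rightarrow> real" where
  "mx_a n beta c k = pochhammer (- real n) k * (1 - 1 / c) ^ k / (pochhammer beta k * fact k)"

definition mx_P :: "nat \<Rightarrow> real \<Rightarrow> real \<Rightarrow> real \<Rightarrow> real" where
  "mx_P n beta c x = (\<Sum>k\<le>n. mx_a n beta c k * pochhammer (- x) k)"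

lemma M_eq: "meixner_M n beta c x = (c / (c - 1)) ^ n * pochhammer beta n * mx_P n beta c x"
  unfolding meixner_M_def mx_P_def mx_a_def by (simp add: sum_distrib_left mult_ac)

lemma negbin: "pochhammer (- real n) k / fact k = (-1) ^ k * real (n choose k)"
  by (simp add: binomial_gbinomial gbinomial_pochhammer)

lemma orth:
  fixes beta c :: real
  assumes c: "0 < c" "c < 1" and nz: "\<And>k. pochhammer beta k \<noteq> 0" and j: "j < n"
  shows "(\<lambda>x. pochhammer beta x * c ^ x / fact x * mx_P n beta c (real x) * pochhammer (real x + beta) j) sums 0"
proof -
  let ?g = "beta + real j"
  have ac: "\<bar>c\<bar> < 1" using c by simp
  have pp: "pochhammer beta x * pochhammer (real x + beta) j = pochhammer beta j * pochhammer ?g x" for x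
    using pochhammer_product'[of beta x j] pochhammer_product'[of beta j x]
    by (simp add: add.commute)
  have eqx: "pochhammer beta x * c ^ x / fact x * mx_P n beta c (real x) * pochhammer (real x + beta) j
     = (\<Sum>k\<le>n. mx_a n beta c k * pochhammer beta j *
          (pochhammer ?g x * c ^ x / fact x * pochhammer (- real x) k))" for x
  proof -
    have "pochhammer beta x * c ^ x / fact x * mx_P n beta c (real x) * pochhammer (real x + beta) j
        = (pochhammer beta x * pochhammer (real x + beta) j) * (c ^ x / fact x) * mx_P n beta c (real x)"
      by simp
    also have "\<dots> = pochhammer beta j * pochhammer ?g x * (c ^ x / fact x) * mx_P n beta c (real x)"
      by (simp only: pp)
    finally show ?thesis unfolding mx_P_def by (simp add: sum_distrib_left sum_distrib_right sum_divide_distrib mult_ac)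
  qed
  have "(\<lambda>x. \<Sum>k\<le>n. mx_a n beta c k * pochhammer beta j *
          (pochhammer ?g x * c ^ x / fact x * pochhammer (- real x) k)) sums
        (\<Sum>k\<le>n. mx_a n beta c k * pochhammer beta j *
          ((-1) ^ k * c ^ k * pochhammer ?g k * (1 - c) powr (- (?g + k))))"
    by (intro sums_sum sums_mult moment ac)
  moreover have "(\<Sum>k\<le>n. mx_a n beta c k * pochhammer beta j *
          ((-1) ^ k * c ^ k * pochhammer ?g k * (1 - c) powr (- (?g + k)))) = 0"
  proof -
    have t: "mx_a n beta c k * pochhammer beta j *
          ((-1) ^ k * c ^ k * pochhammer ?g k * (1 - c) powr (- (?g + k)))
        = (1 - c) powr (- ?g) * ((-1) ^ k * real (n choose k) * pochhammer (beta + real k) j)" for k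
    proof -
      have p1: "(1 - c) powr (- (?g + k)) = (1 - c) powr (- ?g) / (1 - c) ^ k"
        using c by (simp add: powr_diff powr_realpow diff_conv_add_uminus[symmetric] powr_add)
      have p2: "(1 - 1 / c) ^ k * ((-1) ^ k * c ^ k) / (1 - c) ^ k = 1"
      proof -
        have "(1 - 1 / c) ^ k * ((-1) ^ k * c ^ k) = ((1 - 1 / c) * (-1) * c) ^ k"
          by (simp only: power_mult_distrib mult.assoc)
        also have "(1 - 1 / c) * (-1) * c = 1 - c" using c by (simp add: field_simps)
        finally show ?thesis using c by simp
      qed
      have p3: "pochhammer beta j * pochhammer ?g k = pochhammer beta k * pochhammer (beta + real k) j"
        using pochhammer_product'[of beta j k] pochhammer_product'[of beta k j] by (simp add: add.commute)
      have "mx_a n beta c k * pochhammer beta j *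
          ((-1) ^ k * c ^ k * pochhammer ?g k * (1 - c) powr (- (?g + k)))
        = (pochhammer (- real n) k / fact k) * (pochhammer beta j * pochhammer ?g k / pochhammer beta k)
          * ((1 - 1 / c) ^ k * ((-1) ^ k * c ^ k) / (1 - c) ^ k) * (1 - c) powr (- ?g)"
        unfolding mx_a_def p1 by (simp add: field_simps)
      also have "\<dots> = (-1) ^ k * real (n choose k) * pochhammer (beta + real k) j * (1 - c) powr (- ?g)"
        unfolding negbin p2 p3 using nz[of k] by simp
      finally show ?thesis by simp
    qed
    show ?thesis unfolding t sum_distrib_left[symmetric] using findiff[OF j, of beta] by simp
  qed
  ultimately show ?thesis unfolding eqx by simp
qed

definition inspan :: "real \<Rightarrow> nat \<Rightarrow> (real \<Rightarrow> real) \<Rightarrow> bool" where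
  "inspan beta m f \<longleftrightarrow> (\<exists>d. \<forall>x. f x = (\<Sum>j<m. d j * pochhammer (x + beta) j))"

lemma inspan_one: "inspan beta 1 (\<lambda>x. 1)"
  unfolding inspan_def by (rule exI[of _ "\<lambda>_. 1"]) simp

lemma inspan_mult:
  assumes "inspan beta m f"
  shows "inspan beta (Suc m) (\<lambda>x. (x - r) * f x)"
proof -
  obtain d where d: "\<And>x. f x = (\<Sum>j<m. d j * pochhammer (x + beta) j)"
    using assms unfolding inspan_def by blast
  define d' where "d' j = (if j = 0 then 0 else d (j - 1)) - (if j < m then d j * (beta + real j + r) else 0)" for j
  have "(x - r) * f x = (\<Sum>j<Suc m. d' j * pochhammer (x + beta) j)" for x
  proof -
    have lin: "(x - r) * pochhammer (x + beta) j = pochhammer (x + beta) (Suc j) - (beta + real j + r) * pochhammer (x + beta) j" for j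
      by (simp add: pochhammer_rec' algebra_simps)
    have "(x - r) * f x = (\<Sum>j<m. d j * ((x - r) * pochhammer (x + beta) j))"
      unfolding d sum_distrib_left by (simp add: mult_ac)
    also have "\<dots> = (\<Sum>j<m. d j * pochhammer (x + beta) (Suc j) - d j * (beta + real j + r) * pochhammer (x + beta) j)"
      by (simp only: lin right_diff_distrib mult.assoc)
    also have "\<dots> = (\<Sum>j<m. d j * pochhammer (x + beta) (Suc j)) - (\<Sum>j<m. d j * (beta + real j + r) * pochhammer (x + beta) j)"
      by (rule sum_subtractf)
    also have "(\<Sum>j<m. d j * pochhammer (x + beta) (Suc j)) = (\<Sum>j<Suc m. (if j = 0 then 0 else d (j - 1)) * pochhammer (x + beta) j)"
      by (subst sum.lessThan_Suc_shift) simp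
    also have "(\<Sum>j<m. d j * (beta + real j + r) * pochhammer (x + beta) j) = (\<Sum>j<Suc m. (if j < m then d j * (beta + real j + r) else 0) * pochhammer (x + beta) j)"
      by simp
    finally show ?thesis unfolding d'_def by (simp add: sum_subtractf left_diff_distrib)
  qed
  then show ?thesis unfolding inspan_def by blast
qed

lemma inspan_prod:
  assumes "finite A"
  shows "inspan beta (Suc (card A)) (\<lambda>x. \<Prod>i\<in>A. (x - r i))"
  using assms
proof (induction A rule: finite_induct)
  case empty then show ?case using inspan_one by simp
next
  case (insert a A)
  then show ?case using inspan_mult[OF insert.IH, of "r a"] by simp
qed

lemma orth_span:
  fixes beta c :: real
  assumes c: "0 < c" "c < 1" and nz: "\<And>k. pochhammer beta k \<noteq> 0" and sp: "inspan beta m f" and mn: "m \<le> n"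
  shows "(\<lambda>x. pochhammer beta x * c ^ x / fact x * mx_P n beta c (real x) * f (real x)) sums 0"
proof -
  obtain d where d: "\<And>x. f x = (\<Sum>j<m. d j * pochhammer (x + beta) j)"
    using sp unfolding inspan_def by blast
  have "(\<lambda>x. \<Sum>j<m. d j * (pochhammer beta x * c ^ x / fact x * mx_P n beta c (real x) * pochhammer (real x + beta) j))
        sums (\<Sum>j<m. d j * 0)"
    by (intro sums_sum sums_mult orth[OF c nz]) (use mn in auto)
  then show ?thesis unfolding d by (simp add: sum_distrib_left mult_ac sum_divide_distrib)
qed

definition mx_poly :: "nat \<Rightarrow> real \<Rightarrow> real \<Rightarrow> real poly" where
  "mx_poly n beta c = (\<Sum>k\<le>n. smult (mx_a n beta c k) (\<Prod>i<k. [:of_nat i, -1:]))"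

lemma mx_poly_eval: "poly (mx_poly n beta c) x = mx_P n beta c x"
  unfolding mx_poly_def mx_P_def
  by (simp add: poly_sum poly_prod pochhammer_prod lessThan_atLeast0)

lemma mx_poly_degree: "degree (mx_poly n beta c) \<le> n"
  unfolding mx_poly_def
proof (rule degree_sum_le)
  fix k assume k: "k \<in> {..n}"
  have "degree (\<Prod>i<k. [:of_nat i, -1::real:]) \<le> (\<Sum>i<k. degree [:of_nat i, -1::real:])"
    using degree_prod_sum_le[of "{..<k}" "\<lambda>i. [:of_nat i, -1::real:]"] by (simp add: o_def)
  also have "\<dots> \<le> k" by simp
  finally show "degree (smult (mx_a n beta c k) (\<Prod>i<k. [:of_nat i, -1:])) \<le> n"
    using k degree_smult_le[of "mx_a n beta c k" "\<Prod>i<k. [:of_nat i, -1::real:]"] by auto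
qed simp

lemma factor:
  fixes p :: "real poly" and r :: "nat \<Rightarrow> real"
  assumes deg: "degree p \<le> n" and inj: "inj_on r {1..n}" and roots: "\<And>i. i \<in> {1..n} \<Longrightarrow> poly p (r i) = 0"
  shows "\<exists>C. \<forall>x. poly p x = C * (\<Prod>i\<in>{1..n}. (x - r i))"
proof -
  define R where "R = (\<Prod>i\<in>{1..n}. [:- r i, 1:])"
  have degR: "degree R = n" unfolding R_def
    by (subst degree_prod_eq_sum_degree) auto
  have lcR: "lead_coeff R = 1" unfolding R_def by (simp add: lead_coeff_prod)
  define Q where "Q = p - smult (coeff p n) R"
  have "Q = 0"
  proof (rule ccontr)
    assume Q: "Q \<noteq> 0"
    have dQ: "degree Q \<le> n" unfolding Q_def
      using deg degR by (intro degree_diff_le) auto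
    have cQ: "coeff Q n = 0" unfolding Q_def using lcR degR by simp
    have "degree Q \<noteq> n" using cQ Q by (metis leading_coeff_0_iff)
    with dQ have lt: "degree Q < n" by simp
    have "poly R (r i) = 0" if "i \<in> {1..n}" for i
      unfolding R_def poly_prod using that by (intro prod_zero[of "{1..n}"]) (auto intro!: bexI[of _ i])
    then have "r ` {1..n} \<subseteq> {x. poly Q x = 0}"
      using roots unfolding Q_def by auto
    then have "card (r ` {1..n}) \<le> card {x. poly Q x = 0}"
      by (intro card_mono poly_roots_finite Q)
    also have "\<dots> \<le> degree Q" by (rule card_poly_roots_bound[OF Q])
    finally show False using lt card_image[OF inj] by simp
  qed
  then have pe: "p = smult (coeff p n) R" unfolding Q_def by simp
  have "poly p x = coeff p n * (\<Prod>i\<in>{1..n}. (x - r i))" for x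
  proof -
    have "poly p x = coeff p n * poly R x" using pe by (metis poly_smult)
    moreover have "poly R x = (\<Prod>i\<in>{1..n}. (x - r i))" by (simp add: R_def poly_prod)
    ultimately show ?thesis by simp
  qed
  then show ?thesis by blast
qed

lemma P_at0: "mx_P n beta c 0 = 1"
proof -
  have "mx_P n beta c 0 = (\<Sum>k\<in>{0}. mx_a n beta c k * pochhammer (- 0) k)"
    unfolding mx_P_def by (rule sum.mono_neutral_right) (auto simp: pochhammer_0_left)
  then show ?thesis by (simp add: mx_a_def)
qed

lemma P_at1:
  assumes "n \<ge> 1"
  shows "mx_P n beta c 1 = 1 + real n * (1 - 1 / c) / beta"
proof -
  have "mx_P n beta c 1 = (\<Sum>k\<in>{0,1}. mx_a n beta c k * pochhammer (- 1) k)"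
    unfolding mx_P_def using assms
    by (rule_tac sum.mono_neutral_right) (auto simp: pochhammer_of_nat_eq_0_iff[of 1, simplified])
  then show ?thesis by (simp add: mx_a_def)
qed

lemma sum_k_binom: "(\<Sum>k\<le>n. real k * real (n choose k) * u ^ k) = real n * u * (1 + u) ^ (n - 1)"
proof (cases n)
  case 0 then show ?thesis by simp
next
  case (Suc m)
  have "(\<Sum>k\<le>Suc m. real k * real (Suc m choose k) * u ^ k) = (\<Sum>k\<le>m. real (Suc k) * real (Suc m choose Suc k) * u ^ Suc k)"
    by (subst sum.atMost_Suc_shift) simp
  also have "\<dots> = (\<Sum>k\<le>m. real (Suc m) * u * (real (m choose k) * u ^ k * 1 ^ (m - k)))"
  proof (rule sum.cong)
    fix k assume "k \<in> {..m}"
    have "real (Suc k) * real (Suc m choose Suc k) = real (Suc m) * real (m choose k)"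
      using Suc_times_binomial_eq[of m k] by (metis mult.commute of_nat_mult)
    then show "real (Suc k) * real (Suc m choose Suc k) * u ^ Suc k = real (Suc m) * u * (real (m choose k) * u ^ k * 1 ^ (m - k))"
      by simp
  qed simp
  also have "\<dots> = real (Suc m) * u * (u + 1) ^ m"
    by (simp add: binomial_ring[of u 1 m] sum_distrib_left)
  finally show ?thesis using Suc by (simp add: add.commute)
qed

lemma P_atb:
  fixes beta c :: real
  assumes b: "-2 < beta" "beta < -1" and c: "0 < c" "c < 1" and n: "n \<ge> 1"
    and nb: "real n > beta / (c - 1)"
  shows "mx_P n beta c (- beta - 1) < 0"
proof -
  define u where "u = 1 / c - 1"
  have nz: "pochhammer beta k \<noteq> 0" for k
    using b by (auto simp: pochhammer_eq_0_iff)
  have tm: "mx_a n beta c k * pochhammer (- (- beta - 1)) k = real (n choose k) * u ^ k + real k * real (n choose k) * u ^ k / beta" for k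
  proof -
    have r1: "pochhammer (beta + 1) k * beta = pochhammer beta k * (beta + real k)"
      using pochhammer_rec[of beta k] pochhammer_rec'[of beta k] by (simp add: mult_ac)
    have r2: "(1 - 1 / c) ^ k * (-1) ^ k = u ^ k"
      unfolding u_def power_mult_distrib[symmetric] by simp
    have "mx_a n beta c k * pochhammer (- (- beta - 1)) k
        = (pochhammer (- real n) k / fact k) * (1 - 1 / c) ^ k * (pochhammer (beta + 1) k * beta) / (pochhammer beta k * beta)"
      unfolding mx_a_def using b by (simp add: field_simps)
    also have "\<dots> = real (n choose k) * u ^ k * (beta + real k) / beta"
      unfolding negbin r1 using nz[of k] b r2 by (simp add: field_simps)
    finally show ?thesis using b by (simp add: field_simps)
  qed
  have "mx_P n beta c (- beta - 1) = (\<Sum>k\<le>n. real (n choose k) * u ^ k) + (\<Sum>k\<le>n. real k * real (n choose k) * u ^ k) / beta"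
    unfolding mx_P_def tm by (simp add: sum.distrib sum_divide_distrib)
  also have "\<dots> = (1 + u) ^ n + real n * u * (1 + u) ^ (n - 1) / beta"
    unfolding sum_k_binom using binomial_ring[of u 1 n] by (simp add: add.commute)
  also have "\<dots> = (1 + u) ^ (n - 1) * ((1 + u) + real n * u / beta)"
    using n by (cases n) (auto simp: field_simps)
  finally have eq: "mx_P n beta c (- beta - 1) = (1 + u) ^ (n - 1) * ((1 + u) + real n * u / beta)" .
  have pos: "(1 + u) ^ (n - 1) > 0" using c unfolding u_def by simp
  have "n * (c - 1) < beta" using nb c by (simp add: divide_less_eq)
  then have "beta + real n * (1 - c) > 0" by (simp add: algebra_simps)
  then have "(1 + u) + real n * u / beta = (beta + real n * (1 - c)) / (c * beta)"
    using c b unfolding u_def by (simp add: field_simps)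
  also have "\<dots> < 0" using c b \<open>beta + real n * (1 - c) > 0\<close> by (simp add: divide_pos_neg mult_pos_neg)
  finally show ?thesis unfolding eq using pos by (simp add: mult_pos_neg)
qed

lemma w_nonneg:
  fixes beta c :: real
  assumes b: "-2 < beta" "beta < -1" and c: "0 < c" and x: "x \<ge> 2"
  shows "pochhammer beta x * c ^ x / fact x > 0"
proof -
  have "pochhammer beta x = pochhammer beta 2 * pochhammer (beta + 2) (x - 2)"
    using pochhammer_product[of 2 x beta] x by simp
  moreover have "pochhammer beta 2 > 0"
    using b by (simp add: numeral_2_eq_2 pochhammer_rec' mult_neg_neg)
  moreover have "pochhammer (beta + 2) (x - 2) > 0" using b by (intro pochhammer_pos) simp
  ultimately show ?thesis using c by simp
qed

theorem lemma4p3: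
  fixes beta c :: real and n :: nat and xs :: "nat \<Rightarrow> real"
  assumes "-2 < beta" "beta < -1"
    and "0 < c" "c < 1"
    and "n \<ge> 3"
    and "real n > beta / (c - 1)"
    and "strict_mono_on {1..n} xs"
    and "{x. meixner_M n beta c x = 0} = xs ` {1..n}"
  shows "0 < xs 1 \<and> xs 1 < -beta - 1 \<and> -beta - 1 < xs 2 \<and> xs 2 < 1
         \<and> 1 < -beta \<and> -beta < 2 \<and> 2 < xs 3"
proof -
  note b = assms(1,2) and c = assms(3,4) and n3 = assms(5) and nb = assms(6)
    and sm = assms(7) and zs = assms(8)
  have nz: "\<And>k. pochhammer beta k \<noteq> 0"
    using b by (auto simp: pochhammer_eq_0_iff)
  have K: "(c / (c - 1)) ^ n * pochhammer beta n \<noteq> 0" using c nz by simp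
  have roots: "{x. mx_P n beta c x = 0} = xs ` {1..n}"
    using zs c nz[of n] by (simp add: M_eq)
  have lt: "xs i < xs j" if "i \<in> {1..n}" "j \<in> {1..n}" "i < j" for i j
    using strict_mono_onD[OF sm that] .
  have le: "xs i \<le> xs j" if "i \<in> {1..n}" "j \<in> {1..n}" "i \<le> j" for i j
    using lt[of i j] that by (cases "i = j") auto
  have inj: "inj_on xs {1..n}" using sm by (rule strict_mono_on_imp_inj_on)
  obtain C where fac: "\<And>x. mx_P n beta c x = C * (\<Prod>i\<in>{1..n}. (x - xs i))"
  proof -
    have "\<exists>C. \<forall>x. poly (mx_poly n beta c) x = C * (\<Prod>i\<in>{1..n}. (x - xs i))"
      by (rule factor[OF mx_poly_degree inj]) (use roots in \<open>auto simp: mx_poly_eval\<close>)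
    then show ?thesis using that by (auto simp: mx_poly_eval)
  qed
  have C0: "C \<noteq> 0" using fac[of 0] P_at0[of n beta c] by auto
  have x3: "xs 3 > 2"
  proof (rule ccontr)
    assume "\<not> xs 3 > 2"
    then have x32: "xs 3 \<le> 2" by simp
    define pp where "pp x = (x - 0) * ((x - 1) * (\<Prod>i\<in>{4..n}. (x - xs i)))" for x
    have "inspan beta (Suc (Suc (Suc (card {4..n})))) pp"
      unfolding pp_def by (intro inspan_mult inspan_prod) simp
    moreover have "Suc (Suc (Suc (card {4..n}))) = n" using n3 by simp
    ultimately have sp: "inspan beta n pp" by simp
    have S: "(\<lambda>x. pochhammer beta x * c ^ x / fact x * mx_P n beta c (real x) * pp (real x)) sums 0"
      by (rule orth_span[OF c nz sp order.refl])
    define h where "h x = pochhammer beta x * c ^ x / fact x *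
        (real x * (real x - 1) * (\<Prod>i\<in>{1..3}. (real x - xs i)) * (\<Prod>i\<in>{4..n}. (real x - xs i)) ^ 2)" for x
    have split: "(\<Prod>i\<in>{1..n}. (y - xs i)) = (\<Prod>i\<in>{1..3}. (y - xs i)) * (\<Prod>i\<in>{4..n}. (y - xs i))" for y
    proof -
      have "{1..n} = {1..3} \<union> {4..n}" using n3 by auto
      then show ?thesis by (simp add: prod.union_disjoint)
    qed
    have eqh: "pochhammer beta x * c ^ x / fact x * mx_P n beta c (real x) * pp (real x) = C * h x" for x
      unfolding fac split pp_def h_def by (simp add: power2_eq_square mult_ac)
    have "(\<lambda>x. C * h x) sums 0" using S unfolding eqh .
    then have "(\<lambda>x. (1 / C) * (C * h x)) sums ((1 / C) * 0)" by (rule sums_mult)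
    then have hs: "h sums 0" using C0 by simp
    have hnn: "h x \<ge> 0" for x
    proof (cases "x \<ge> 2")
      case False
      then have "x = 0 \<or> x = 1" by auto
      then show ?thesis unfolding h_def by auto
    next
      case True
      have w: "pochhammer beta x * c ^ x / fact x > 0" by (rule w_nonneg[OF b c(1) True])
      have f1: "real x * (real x - 1) \<ge> 0" using True by simp
      have f2: "(\<Prod>i\<in>{1..3}. (real x - xs i)) \<ge> 0"
      proof (rule prod_nonneg)
        fix i :: nat assume i: "i \<in> {1..3}"
        then have "xs i \<le> xs 3" using n3 by (intro le) auto
        then show "real x - xs i \<ge> 0" using x32 True by simp
      qed
      have f3: "(\<Prod>i\<in>{4..n}. (real x - xs i)) ^ 2 \<ge> 0" by simp
      show ?thesis unfolding h_def using w f1 f2 f3 True by (intro mult_nonneg_nonneg) auto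
    qed
    define x0 where "x0 = nat \<lceil>xs n\<rceil> + 2"
    have gx: "real x0 - xs i > 0" if "i \<in> {1..n}" for i
    proof -
      have "xs i \<le> xs n" using that n3 by (intro le) auto
      moreover have "real x0 \<ge> xs n + 1" unfolding x0_def by linarith
      ultimately show ?thesis by simp
    qed
    have hpos: "h x0 > 0"
    proof -
      have w: "pochhammer beta x0 * c ^ x0 / fact x0 > 0" by (rule w_nonneg[OF b c(1)]) (simp add: x0_def)
      have f1: "real x0 * (real x0 - 1) > 0" by (simp add: x0_def)
      have f2: "(\<Prod>i\<in>{1..3}. (real x0 - xs i)) > 0" using gx n3 by (intro prod_pos) auto
      have f3: "(\<Prod>i\<in>{4..n}. (real x0 - xs i)) > 0" using gx n3 by (intro prod_pos) auto
      show ?thesis unfolding h_def using w f1 f2 f3 by (intro mult_pos_pos zero_less_power) (auto simp: x0_def)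
    qed
    have "0 < suminf h" by (rule suminf_pos2[OF sums_summable[OF hs] hnn hpos])
    then show False using sums_unique[OF hs] by simp
  qed
  have cont: "continuous_on A (mx_P n beta c)" for A
  proof -
    have "continuous_on A (\<lambda>x. poly (mx_poly n beta c) x)" by (intro continuous_intros)
    then show ?thesis by (simp add: mx_poly_eval)
  qed
  have P0: "mx_P n beta c 0 = 1" by (rule P_at0)
  have Pb: "mx_P n beta c (- beta - 1) < 0" using P_atb[OF b c _ nb] n3 by simp
  have P1: "mx_P n beta c 1 > 0"
  proof -
    have "(1 - 1 / c) < 0" using c by simp
    then have "real n * (1 - 1 / c) / beta > 0" using b n3 by (simp add: divide_neg_neg mult_pos_neg)
    then show ?thesis using P_at1[of n beta c] n3 by simp
  qed
  obtain z1 where z1: "0 \<le> z1" "z1 \<le> - beta - 1" "mx_P n beta c z1 = 0"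
    using IVT2'[of "mx_P n beta c" "- beta - 1" 0 0] Pb P0 b cont by auto
  obtain z2 where z2: "- beta - 1 \<le> z2" "z2 \<le> 1" "mx_P n beta c z2 = 0"
    using IVT'[of "mx_P n beta c" "- beta - 1" 0 1] Pb P1 b cont by auto
  have z1s: "0 < z1" "z1 < - beta - 1" using z1 P0 Pb by (auto simp: order.order_iff_strict)
  have z2s: "- beta - 1 < z2" "z2 < 1" using z2 P1 Pb by (auto simp: order.order_iff_strict)
  obtain i1 where i1: "i1 \<in> {1..n}" "z1 = xs i1" using z1 roots by blast
  obtain i2 where i2: "i2 \<in> {1..n}" "z2 = xs i2" using z2 roots by blast
  have i1le: "i1 < 3"
  proof (rule ccontr)
    assume "\<not> i1 < 3"
    then have "xs 3 \<le> xs i1" using i1 n3 by (intro le) auto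
    then show False using x3 z1s b i1 by simp
  qed
  have i2le: "i2 < 3"
  proof (rule ccontr)
    assume "\<not> i2 < 3"
    then have "xs 3 \<le> xs i2" using i2 n3 by (intro le) auto
    then show False using x3 z2s i2 by simp
  qed
  have "i1 < i2"
  proof (rule ccontr)
    assume "\<not> i1 < i2"
    then have "xs i2 \<le> xs i1" using i1 i2 by (intro le) auto
    then show False using z1s z2s i1 i2 by simp
  qed
  then have "i1 = 1" "i2 = 2" using i1 i2 i1le i2le by auto
  then show ?thesis using z1s z2s i1 i2 x3 b by simp
qed

end
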